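(* Let $X,Y$ be finite-dimensional Banach spaces over $\mathbb{K}\in\{\mathbb{R},\mathbb{C}\}$, let $G\in L(X,Y)$ with $\|G\|=1$, and let $T\in L(X,Y)$. Then (i) $S_G(T)=\{ y^*(Tx):x\in S_X,\ y^*\in S_{Y^*},\ \|Gx\|= 1 \}$; (ii) $V_G(T)=\{y^*(Tx):x\in S_X,\ y^*\in S_{Y^*},\ y^*(Gx)= 1 \}$.
   Context: $S_X$ denotes the unit sphere of $X$ and $Y^*$ the dual of $Y$. For $T\in L(X,Y)$: $S_G(T):=\bigcap_{\delta>0}\overline{\{y^*(Tx): x\in S_X,\ y^*\in S_{Y^*},\ \|Gx\|>1-\delta\}}$ and $V_G(T):=\bigcap_{\delta>0}\overline{\{y^*(Tx): x\in S_X,\ y^*\in S_{Y^*},\ \operatorname{Re} y^*(Gx)>1-\delta\}}$ (the numerical range of $T$ with respect to $G$). *)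

theory Defs
  imports "HOL-Analysis.Analysis"
begin

text \<open>A finite-dimensional normed space over the scalar field 'k (real or complex)
is modelled, up to isometric isomorphism, as the coordinate space 'k^'n equipped with
an arbitrary norm N (not necessarily the Euclidean one).\<close>

definition is_norm_on :: "('k::real_normed_field ^ 'n \<Rightarrow> real) \<Rightarrow> bool" where
  "is_norm_on N \<longleftrightarrow>
     (\<forall>x. N x = 0 \<longleftrightarrow> x = 0) \<and>
     (\<forall>c x. N (c *s x) = norm c * N x) \<and>
     (\<forall>x y. N (x + y) \<le> N x + N y)"

definition klinear :: "('k::real_normed_field ^ 'n \<Rightarrow> 'k ^ 'm) \<Rightarrow> bool" where
  "klinear f \<longleftrightarrow> Vector_Spaces.linear (\<lambda>c v. c *s v) (\<lambda>c v. c *s v) f"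

definition op_norm :: "('k::real_normed_field ^ 'n \<Rightarrow> real) \<Rightarrow> ('k ^ 'm \<Rightarrow> real)
    \<Rightarrow> ('k ^ 'n \<Rightarrow> 'k ^ 'm) \<Rightarrow> real" where
  "op_norm NX NY f = (SUP x \<in> {x. NX x = 1}. NY (f x))"

definition unit_sphere :: "('k::real_normed_field ^ 'n \<Rightarrow> real) \<Rightarrow> ('k ^ 'n) set" where
  "unit_sphere N = {x. N x = 1}"

definition dual_sphere :: "('k::real_normed_field ^ 'm \<Rightarrow> real) \<Rightarrow> ('k ^ 'm \<Rightarrow> 'k) set" where
  "dual_sphere NY = {\<phi>. Vector_Spaces.linear (\<lambda>c v. c *s v) (\<lambda>a b. a * b) \<phi> \<and>
                        (SUP y \<in> {y. NY y = 1}. norm (\<phi> y)) = 1}"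

definition S_G :: "('k::real_normed_field ^ 'n \<Rightarrow> real) \<Rightarrow> ('k ^ 'm \<Rightarrow> real)
    \<Rightarrow> ('k ^ 'n \<Rightarrow> 'k ^ 'm) \<Rightarrow> ('k ^ 'n \<Rightarrow> 'k ^ 'm) \<Rightarrow> 'k set" where
  "S_G NX NY G T = (\<Inter>\<delta>\<in>{0<..}. closure
     {\<phi> (T x) | x \<phi>. x \<in> unit_sphere NX \<and> \<phi> \<in> dual_sphere NY \<and> NY (G x) > 1 - \<delta>})"

text \<open>V_G(T); the parameter re is the real-part map of the scalar field
(the identity for 'k = real, Re for 'k = complex).\<close>
definition V_G :: "('k::real_normed_field \<Rightarrow> real) \<Rightarrow> ('k ^ 'n \<Rightarrow> real) \<Rightarrow> ('k ^ 'm \<Rightarrow> real)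
    \<Rightarrow> ('k ^ 'n \<Rightarrow> 'k ^ 'm) \<Rightarrow> ('k ^ 'n \<Rightarrow> 'k ^ 'm) \<Rightarrow> 'k set" where
  "V_G re NX NY G T = (\<Inter>\<delta>\<in>{0<..}. closure
     {\<phi> (T x) | x \<phi>. x \<in> unit_sphere NX \<and> \<phi> \<in> dual_sphere NY \<and> re (\<phi> (G x)) > 1 - \<delta>})"

end

theory Submission imports Defs begin

lemma scaleR_svec: "r *\<^sub>R (x::'k::real_normed_field^'n) = (of_real r::'k) *s x"
  by (simp add: vec_eq_iff) (simp add: scaleR_conv_of_real)

lemma lin_add_scale:
  assumes "Vector_Spaces.linear (\<lambda>c v. c *s v) s2 f"
  shows "f (x + y) = f x + f y" "f (c *s x) = s2 c (f x)"
  using assms unfolding Vector_Spaces.linear_iff by auto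

lemma additive_sum:
  fixes f :: "'a::comm_monoid_add \<Rightarrow> 'b::ab_group_add"
  assumes "\<And>x y. f (x + y) = f x + f y"
  shows "f (sum g S) = (\<Sum>i\<in>S. f (g i))"
proof -
  have f0: "f 0 = 0" using assms[of 0 0] by simp
  show ?thesis
  proof (induction S rule: infinite_finite_induct)
    case (infinite A) then show ?case by (simp add: f0)
  next
    case empty then show ?case by (simp add: f0)
  next
    case (insert x F) then show ?case by (simp add: assms)
  qed
qed

lemma functional_expand:
  fixes f :: "'k::field^'n \<Rightarrow> 'k"
  assumes "Vector_Spaces.linear (\<lambda>c v. c *s v) (\<lambda>a b. a * b) f"
  shows "f y = (\<Sum>i\<in>UNIV. y$i * f (axis i 1))"
proof -
  have "f y = f (\<Sum>i\<in>UNIV. y$i *s axis i 1)" by (simp add: basis_expansion)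
  also have "\<dots> = (\<Sum>i\<in>UNIV. f (y$i *s axis i 1))"
    by (rule additive_sum) (rule lin_add_scale[OF assms])
  also have "\<dots> = (\<Sum>i\<in>UNIV. y$i * f (axis i 1))"
    using lin_add_scale(2)[OF assms] by simp
  finally show ?thesis .
qed

lemma klinear_linear:
  fixes f :: "'k::real_normed_field^'n \<Rightarrow> 'k^'m"
  assumes "klinear f" shows "linear f"
  using lin_add_scale[OF assms[unfolded klinear_def]]
  by (intro linearI) (auto simp: scaleR_svec)

lemma functional_linear:
  fixes f :: "'k::real_normed_field^'n \<Rightarrow> 'k"
  assumes "Vector_Spaces.linear (\<lambda>c v. c *s v) (\<lambda>a b. a * b) f" shows "linear f"
  using lin_add_scale[OF assms]
  by (intro linearI) (auto simp: scaleR_svec scaleR_conv_of_real)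

definition app :: "'k::field^'n \<Rightarrow> 'k^'n \<Rightarrow> 'k" where
  "app w y = (\<Sum>i\<in>UNIV. y$i * w$i)"

lemma app_linear: "Vector_Spaces.linear (\<lambda>c v. c *s v) (\<lambda>a b. a * b) (app (w::'k::field^'n))"
  unfolding Vector_Spaces.linear_iff
  by (auto simp: app_def vec.vector_space_axioms vector_space_over_itself.vector_space_axioms
      sum.distrib sum_distrib_left algebra_simps)

lemma app_tendsto:
  fixes w :: "nat \<Rightarrow> 'k::real_normed_field^'n"
  assumes "w \<longlonglongrightarrow> w0" "y \<longlonglongrightarrow> y0"
  shows "(\<lambda>k. app (w k) (y k)) \<longlonglongrightarrow> app w0 y0"
  unfolding app_def by (intro tendsto_intros assms)

lemma functional_app:
  fixes f :: "'k::field^'n \<Rightarrow> 'k"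
  assumes "Vector_Spaces.linear (\<lambda>c v. c *s v) (\<lambda>a b. a * b) f"
  shows "f = app (\<chi> i. f (axis i 1))"
proof (rule ext)
  fix y
  have "f y = (\<Sum>i\<in>UNIV. y$i * f (axis i 1))" by (rule functional_expand[OF assms])
  also have "\<dots> = app (\<chi> i. f (axis i 1)) y" by (simp add: app_def)
  finally show "f y = app (\<chi> i. f (axis i 1)) y" .
qed

context
  fixes N :: "'k::{real_normed_field,euclidean_space}^'n \<Rightarrow> real"
  assumes N: "is_norm_on N"
begin

lemma N_scale: "N (c *s x) = norm c * N x" using N by (simp add: is_norm_on_def)
lemma N_tri: "N (x + y) \<le> N x + N y" using N by (simp add: is_norm_on_def)
lemma N_zero: "N x = 0 \<longleftrightarrow> x = 0" using N by (simp add: is_norm_on_def)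
lemma N_scaleR: "N (r *\<^sub>R x) = \<bar>r\<bar> * N x" by (simp add: scaleR_svec N_scale)
lemma N_0: "N 0 = 0" using N_zero by simp
lemma N_neg: "N (- x) = N x" using N_scaleR[of "-1" x] by simp
lemma N_nonneg: "0 \<le> N x"
  using N_tri[of x "-x"] N_neg[of x] N_zero[of 0] by simp
lemma N_minus: "N (x - y) = N (y - x)" using N_neg[of "y - x"] by simp

lemma N_sum: "N (sum g S) \<le> (\<Sum>i\<in>S. N (g i))"
proof (induction S rule: infinite_finite_induct)
  case (insert x F) then show ?case using N_tri[of "g x" "sum g F"] by simp
qed (auto simp: N_0)

definition NC where "NC = (\<Sum>i\<in>UNIV. N (axis i 1))"

lemma N_upper: "N x \<le> NC * norm x"
proof -
  have "N x = N (\<Sum>i\<in>UNIV. x$i *s axis i 1)" by (simp add: basis_expansion)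
  also have "\<dots> \<le> (\<Sum>i\<in>UNIV. N (x$i *s axis i 1))" by (rule N_sum)
  also have "\<dots> = (\<Sum>i\<in>UNIV. norm (x$i) * N (axis i 1))" by (simp add: N_scale)
  also have "\<dots> \<le> (\<Sum>i\<in>UNIV. norm x * N (axis i 1))"
    by (intro sum_mono mult_right_mono N_nonneg Finite_Cartesian_Product.norm_nth_le)
  finally show ?thesis by (simp add: NC_def sum_distrib_left mult.commute)
qed

lemma N_lip: "dist (N x) (N y) \<le> NC * dist x y"
proof -
  have "N x \<le> N (x - y) + N y" using N_tri[of "x - y" y] by simp
  moreover have "N y \<le> N (x - y) + N x" using N_tri[of "y - x" x] N_minus[of x y] by simp
  ultimately have "dist (N x) (N y) \<le> N (x - y)" by (simp add: dist_real_def)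
  then show ?thesis using N_upper[of "x - y"] by (simp add: dist_norm)
qed

lemma NC_nonneg: "0 \<le> NC" unfolding NC_def by (intro sum_nonneg N_nonneg)

lemma N_cont: "continuous_on UNIV N"
  by (rule lipschitz_on_continuous_on[of NC]) (auto intro: lipschitz_onI N_lip NC_nonneg)

lemma N_tendsto: "f \<longlonglongrightarrow> a \<Longrightarrow> (\<lambda>k. N (f k)) \<longlonglongrightarrow> N a"
  using N_cont continuous_on_tendsto_compose[of UNIV N f a] by auto

lemma N_lower: "\<exists>c>0. \<forall>x. c * norm x \<le> N x"
proof -
  have ne: "sphere (0::'k^'n) 1 \<noteq> {}" by simp
  obtain y where y: "y \<in> sphere 0 1" and ymin: "\<forall>z\<in>sphere 0 1. N y \<le> N z"
    using continuous_attains_inf[OF compact_sphere ne continuous_on_subset[OF N_cont]] by blast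
  have "y \<noteq> 0" using y by auto
  then have pos: "N y > 0" using N_zero[of y] N_nonneg[of y] by auto
  have "N y * norm x \<le> N x" for x
  proof (cases "x = 0")
    case True then show ?thesis by (simp add: N_0)
  next
    case False
    have "N y \<le> N (inverse (norm x) *\<^sub>R x)" using ymin False by auto
    also have "\<dots> = N x / norm x" by (simp add: N_scaleR divide_inverse mult.commute)
    finally show ?thesis using False by (simp add: field_simps)
  qed
  then show ?thesis using pos by blast
qed

lemma N_sphere_compact: "compact {x. N x = 1}"
proof -
  obtain c where c: "c > 0" "\<forall>x. c * norm x \<le> N x" using N_lower by blast
  have "closed {x. N x = 1}"
    by (rule closed_Collect_eq) (auto intro: continuous_on_const N_cont)
  moreover have "{x. N x = 1} \<subseteq> cball 0 (1/c)"
  proof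
    fix x assume "x \<in> {x. N x = 1}"
    then have "c * norm x \<le> 1" using c(2)[rule_format, of x] by simp
    then show "x \<in> cball 0 (1/c)" using c by (simp add: field_simps)
  qed
  ultimately show ?thesis
    by (meson bounded_cball bounded_subset compact_eq_bounded_closed)
qed

lemma N_sphere_ne: "\<exists>x. N x = 1"
proof -
  obtain i :: 'n where True by auto
  have "axis i (1::'k) \<noteq> 0" by (simp add: axis_eq_0_iff)
  then have "N (axis i 1) > 0" using N_zero N_nonneg by (metis less_eq_real_def)
  then have "N (inverse (N (axis i 1)) *\<^sub>R axis i 1) = 1" by (simp add: N_scaleR)
  then show ?thesis by blast
qed

end


lemma norm_le_l1_gen: "norm (x::'a::real_normed_vector^'n) \<le> (\<Sum>i\<in>UNIV. norm (x$i))"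
  by (simp add: norm_vec_def L2_set_le_sum)

lemma compact_bdd:
  fixes f :: "'a::topological_space \<Rightarrow> real"
  shows "compact K \<Longrightarrow> continuous_on K f \<Longrightarrow> bdd_above (f ` K)"
  by (intro bounded_imp_bdd_above compact_imp_bounded compact_continuous_image)

lemma functional_cont:
  fixes f :: "'k::{real_normed_field,euclidean_space}^'n \<Rightarrow> 'k"
  assumes "Vector_Spaces.linear (\<lambda>c v. c *s v) (\<lambda>a b. a * b) f"
  shows "continuous_on S f"
  using functional_linear[OF assms] linear_conv_bounded_linear
  by (metis linear_continuous_on)

lemma klinear_cont:
  fixes f :: "'k::{real_normed_field,euclidean_space}^'n \<Rightarrow> 'k^'m"
  assumes "klinear f"
  shows "continuous_on S f"
  using klinear_linear[OF assms] linear_conv_bounded_linear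
  by (metis linear_continuous_on)

lemma klinear_tendsto:
  fixes f :: "'k::{real_normed_field,euclidean_space}^'n \<Rightarrow> 'k^'m"
  assumes "klinear f" "xs \<longlonglongrightarrow> x"
  shows "(\<lambda>k. f (xs k)) \<longlonglongrightarrow> f x"
  using klinear_cont[OF assms(1), of UNIV] continuous_on_tendsto_compose[of UNIV f xs x] assms(2)
  by auto

context
  fixes NY :: "'k::{real_normed_field,euclidean_space}^'m \<Rightarrow> real"
  assumes NY: "is_norm_on NY"
begin

lemma dual_bdd:
  assumes "Vector_Spaces.linear (\<lambda>c v. c *s v) (\<lambda>a b. a * b) f"
  shows "bdd_above ((\<lambda>y. norm (f y)) ` {y. NY y = 1})"
  by (intro compact_bdd N_sphere_compact[OF NY] continuous_on_norm functional_cont assms)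

lemma dual_le:
  assumes "f \<in> dual_sphere NY"
  shows "norm (f y) \<le> NY y"
proof -
  have lin: "Vector_Spaces.linear (\<lambda>c v. c *s v) (\<lambda>a b. a * b) f"
    and sup: "(SUP y \<in> {y. NY y = 1}. norm (f y)) = 1"
    using assms by (auto simp: dual_sphere_def)
  have one: "norm (f z) \<le> 1" if "NY z = 1" for z
    using cSUP_upper[of z "{y. NY y = 1}" "\<lambda>y. norm (f y)"] that dual_bdd[OF lin] sup by auto
  show ?thesis
  proof (cases "y = 0")
    case True
    then show ?thesis using lin_add_scale(2)[OF lin, of 0 0] N_0[OF NY] by simp
  next
    case False
    then have pos: "NY y > 0" using N_zero[OF NY, of y] N_nonneg[OF NY, of y] by auto
    let ?z = "(of_real (inverse (NY y))::'k) *s y"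
    have "NY ?z = 1" using pos by (simp add: N_scale[OF NY] norm_inverse)
    then have "norm (f ?z) \<le> 1" by (rule one)
    moreover have "f ?z = of_real (inverse (NY y)) * f y" by (rule lin_add_scale(2)[OF lin])
    ultimately have "inverse (NY y) * norm (f y) \<le> 1" using pos by (simp add: norm_mult norm_inverse)
    then show ?thesis using pos by (simp add: field_simps)
  qed
qed

lemma dual_attain:
  assumes "f \<in> dual_sphere NY"
  shows "\<exists>y. NY y = 1 \<and> norm (f y) = 1"
proof -
  have lin: "Vector_Spaces.linear (\<lambda>c v. c *s v) (\<lambda>a b. a * b) f"
    and sup: "(SUP y \<in> {y. NY y = 1}. norm (f y)) = 1"
    using assms by (auto simp: dual_sphere_def)
  have ne: "{y. NY y = 1} \<noteq> {}" using N_sphere_ne[OF NY] by auto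
  obtain y where y: "y \<in> {y. NY y = 1}" and ymax: "\<forall>z\<in>{y. NY y = 1}. norm (f z) \<le> norm (f y)"
    using continuous_attains_sup[OF N_sphere_compact[OF NY] ne
        continuous_on_norm[OF functional_cont[OF lin]]] by blast
  have "(SUP y \<in> {y. NY y = 1}. norm (f y)) = norm (f y)"
    by (rule cSup_eq_maximum) (use y ymax in auto)
  then show ?thesis using y sup by auto
qed

end


lemma core:
  fixes NX :: "'k::{real_normed_field,euclidean_space}^'n \<Rightarrow> real"
    and NY :: "'k^'m \<Rightarrow> real"
    and xs :: "nat \<Rightarrow> 'k^'n" and ps :: "nat \<Rightarrow> 'k^'m \<Rightarrow> 'k"
  assumes NX: "is_norm_on NX" and NY: "is_norm_on NY"
    and xs: "\<forall>k. NX (xs k) = 1" and ps: "\<forall>k. ps k \<in> dual_sphere NY"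
  shows "\<exists>r x \<phi>. strict_mono r \<and> NX x = 1 \<and> \<phi> \<in> dual_sphere NY \<and> (xs \<circ> r) \<longlonglongrightarrow> x \<and>
           (\<forall>vs v. vs \<longlonglongrightarrow> v \<longrightarrow> (\<lambda>k. ps (r k) (vs k)) \<longlonglongrightarrow> \<phi> v)"
proof -
  have "\<forall>k. \<exists>y. NY y = 1 \<and> norm (ps k y) = 1" using dual_attain[OF NY] ps by blast
  then obtain ys where ys: "\<forall>k. NY (ys k) = 1 \<and> norm (ps k (ys k)) = 1" by metis
  define ws where "ws k = (\<chi> i. ps k (axis i 1))" for k
  have lin: "Vector_Spaces.linear (\<lambda>c v. c *s v) (\<lambda>a b. a * b) (ps k)" for k
    using ps by (auto simp: dual_sphere_def)
  have psw: "ps k = app (ws k)" for k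
    unfolding ws_def by (rule functional_app[OF lin])
  define CW where "CW = (\<Sum>i\<in>UNIV. NY (axis i 1))"
  have wsb: "norm (ws k) \<le> CW" for k
  proof -
    have "norm (ws k) \<le> (\<Sum>i\<in>UNIV. norm (ws k $ i))" by (rule norm_le_l1_gen)
    also have "\<dots> \<le> CW" unfolding CW_def ws_def
      by (intro sum_mono) (simp add: dual_le[OF NY] ps)
    finally show ?thesis .
  qed
  obtain cX where cX: "cX > 0" "\<forall>x. cX * norm x \<le> NX x" using N_lower[OF NX] by blast
  obtain cY where cY: "cY > 0" "\<forall>x. cY * norm x \<le> NY x" using N_lower[OF NY] by blast
  have xsb: "norm (xs k) \<le> 1 / cX" for k
    using cX(2)[rule_format, of "xs k"] xs cX(1) by (simp add: field_simps)
  have ysb: "norm (ys k) \<le> 1 / cY" for k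
    using cY(2)[rule_format, of "ys k"] ys cY(1) by (simp add: field_simps)
  define K where "K = cball (0::'k^'n) (1/cX) \<times> (cball (0::'k^'m) CW \<times> cball (0::'k^'m) (1/cY))"
  have "compact K" unfolding K_def by (intro compact_Times compact_cball)
  then have sK: "seq_compact K" by (rule compact_imp_seq_compact)
  have inK: "\<forall>k. (xs k, ws k, ys k) \<in> K" unfolding K_def using xsb wsb ysb by auto
  obtain l r where l: "l \<in> K" and r: "strict_mono r"
    and lim: "((\<lambda>k. (xs k, ws k, ys k)) \<circ> r) \<longlonglongrightarrow> l"
    using seq_compactE[OF sK, of "\<lambda>k. (xs k, ws k, ys k)"] inK by blast
  obtain x w y where lxy: "l = (x, w, y)" by (cases l) auto
  have limx: "(xs \<circ> r) \<longlonglongrightarrow> x"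
    using tendsto_fst[OF lim] lxy by (simp add: o_def)
  have limw: "(\<lambda>k. ws (r k)) \<longlonglongrightarrow> w"
    using tendsto_fst[OF tendsto_snd[OF lim]] lxy by (simp add: o_def)
  have limy: "(\<lambda>k. ys (r k)) \<longlonglongrightarrow> y"
    using tendsto_snd[OF tendsto_snd[OF lim]] lxy by (simp add: o_def)
  have NXx: "NX x = 1"
  proof -
    have "(\<lambda>k. NX ((xs \<circ> r) k)) \<longlonglongrightarrow> NX x" by (rule N_tendsto[OF NX limx])
    moreover have "(\<lambda>k. NX ((xs \<circ> r) k)) = (\<lambda>k. 1)" using xs by auto
    ultimately show ?thesis using LIMSEQ_unique tendsto_const by metis
  qed
  have joint: "\<forall>vs v. vs \<longlonglongrightarrow> v \<longrightarrow> (\<lambda>k. ps (r k) (vs k)) \<longlonglongrightarrow> app w v"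
    using app_tendsto[OF limw] by (simp add: psw)
  have NYy: "NY y = 1"
  proof -
    have "(\<lambda>k. NY (ys (r k))) \<longlonglongrightarrow> NY y" by (rule N_tendsto[OF NY limy])
    moreover have "(\<lambda>k. NY (ys (r k))) = (\<lambda>k. 1)" using ys by auto
    ultimately show ?thesis using LIMSEQ_unique tendsto_const by metis
  qed
  have normy: "norm (app w y) = 1"
  proof -
    have "(\<lambda>k. norm (ps (r k) (ys (r k)))) \<longlonglongrightarrow> norm (app w y)"
      using joint limy by (intro tendsto_norm) auto
    moreover have "(\<lambda>k. norm (ps (r k) (ys (r k)))) = (\<lambda>k. 1)" using ys by auto
    ultimately show ?thesis using LIMSEQ_unique tendsto_const by metis
  qed
  have le1: "norm (app w z) \<le> 1" if "NY z = 1" for z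
  proof -
    have "(\<lambda>k. norm (ps (r k) z)) \<longlonglongrightarrow> norm (app w z)"
      using joint by (intro tendsto_norm) auto
    moreover have "\<forall>k. norm (ps (r k) z) \<le> 1" using dual_le[OF NY] ps that by metis
    ultimately show ?thesis by (intro LIMSEQ_le_const2) auto
  qed
  have "app w \<in> dual_sphere NY"
    unfolding dual_sphere_def
  proof (intro CollectI conjI app_linear)
    show "(SUP z \<in> {y. NY y = 1}. norm (app w z)) = 1"
      by (rule cSup_eq_maximum) (use NYy normy le1 in auto)
  qed
  then show ?thesis using r NXx limx joint by blast
qed


lemma choice_pair:
  assumes "\<forall>k. \<exists>x p. Q k x p"
  obtains xs ps where "\<forall>k. Q k (xs k) (ps k)"
proof -
  from assms have "\<forall>k. \<exists>y. Q k (fst y) (snd y)" by auto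
  then obtain f where "\<forall>k. Q k (fst (f k)) (snd (f k))" by (rule choice[THEN exE]) 
  then show ?thesis using that[of "\<lambda>k. fst (f k)" "\<lambda>k. snd (f k)"] by blast
qed

lemma seq_to_z:
  fixes a :: "nat \<Rightarrow> 'a::metric_space"
  assumes "\<forall>k. dist (a k) z < inverse (real (Suc k))"
  shows "a \<longlonglongrightarrow> z"
  unfolding lim_sequentially
proof (intro allI impI)
  fix e :: real assume "e > 0"
  then obtain N where N: "inverse (real (Suc N)) < e" using reals_Archimedean by blast
  show "\<exists>N. \<forall>n\<ge>N. dist (a n) z < e"
  proof (intro exI allI impI)
    fix n assume "N \<le> n"
    then have "inverse (real (Suc n)) \<le> inverse (real (Suc N))"
      by (simp add: le_imp_inverse_le)
    moreover have "dist (a n) z < inverse (real (Suc n))" using assms by blast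
    ultimately show "dist (a n) z < e" using N by linarith
  qed
qed

lemma lower_lim:
  assumes "strict_mono r" "\<forall>k. 1 - inverse (real (Suc k)) < b k" "(\<lambda>k. b (r k)) \<longlonglongrightarrow> L"
  shows "1 \<le> (L::real)"
proof -
  have "(\<lambda>k. 1 - inverse (real (Suc k))) \<longlonglongrightarrow> 1 - 0"
    by (intro tendsto_intros LIMSEQ_inverse_real_of_nat)
  then have "((\<lambda>k. 1 - inverse (real (Suc k))) \<circ> r) \<longlonglongrightarrow> 1"
    using LIMSEQ_subseq_LIMSEQ assms(1) by fastforce
  then show ?thesis
    by (rule LIMSEQ_le[OF _ assms(3)]) (use assms(2) less_imp_le in auto)
qed

lemma main:
  fixes NX :: "'k::{real_normed_field,euclidean_space}^'n \<Rightarrow> real"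
    and NY :: "'k^'m \<Rightarrow> real" and G T :: "'k^'n \<Rightarrow> 'k^'m" and re :: "'k \<Rightarrow> real"
  assumes NX: "is_norm_on NX" and NY: "is_norm_on NY" and G: "klinear G" and T: "klinear T"
    and opn: "op_norm NX NY G = 1"
    and re1: "re 1 = 1" and rec: "\<And>f a. f \<longlonglongrightarrow> a \<Longrightarrow> (\<lambda>k. re (f k)) \<longlonglongrightarrow> re a"
    and reone: "\<And>z. 1 \<le> re z \<Longrightarrow> norm z \<le> 1 \<Longrightarrow> z = 1"
  shows "S_G NX NY G T = {\<phi> (T x) | x \<phi>. x \<in> unit_sphere NX \<and> \<phi> \<in> dual_sphere NY \<and> NY (G x) = 1} \<and>
      V_G re NX NY G T = {\<phi> (T x) | x \<phi>. x \<in> unit_sphere NX \<and> \<phi> \<in> dual_sphere NY \<and> \<phi> (G x) = 1}"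
proof -
  have Gle: "NY (G x) \<le> 1" if "NX x = 1" for x
  proof -
    have "continuous_on {x. NX x = 1} (\<lambda>x. NY (G x))"
      by (rule continuous_on_compose2[OF N_cont[OF NY] klinear_cont[OF G]]) auto
    then have "bdd_above ((\<lambda>x. NY (G x)) ` {x. NX x = 1})"
      by (intro compact_bdd N_sphere_compact[OF NX])
    then show ?thesis using cSUP_upper[of x "{x. NX x = 1}" "\<lambda>x. NY (G x)"] that opn
      by (auto simp: op_norm_def)
  qed
  have S1: "S_G NX NY G T \<subseteq> {\<phi> (T x) | x \<phi>. x \<in> unit_sphere NX \<and> \<phi> \<in> dual_sphere NY \<and> NY (G x) = 1}"
  proof
    fix z assume z: "z \<in> S_G NX NY G T"
    have "\<forall>k. \<exists>x \<phi>. NX x = 1 \<and> \<phi> \<in> dual_sphere NY \<and> 1 - inverse (real (Suc k)) < NY (G x) \<and>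
             dist (\<phi> (T x)) z < inverse (real (Suc k))"
    proof
      fix k
      have "z \<in> closure {\<phi> (T x) | x \<phi>. x \<in> unit_sphere NX \<and> \<phi> \<in> dual_sphere NY \<and>
               NY (G x) > 1 - inverse (real (Suc k))}"
        using z unfolding S_G_def by auto
      then show "\<exists>x \<phi>. NX x = 1 \<and> \<phi> \<in> dual_sphere NY \<and> 1 - inverse (real (Suc k)) < NY (G x) \<and>
             dist (\<phi> (T x)) z < inverse (real (Suc k))"
        unfolding closure_approachable unit_sphere_def
        by (drule_tac x="inverse (real (Suc k))" in spec) auto
    qed
    then obtain xs ps where sel: "\<forall>k. NX (xs k) = 1 \<and> ps k \<in> dual_sphere NY \<and>
        1 - inverse (real (Suc k)) < NY (G (xs k)) \<and> dist (ps k (T (xs k))) z < inverse (real (Suc k))"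
      by (rule choice_pair)
    obtain r x \<phi> where r: "strict_mono r" and x: "NX x = 1" and \<phi>: "\<phi> \<in> dual_sphere NY"
      and limx: "(xs \<circ> r) \<longlonglongrightarrow> x"
      and joint: "\<forall>vs v. vs \<longlonglongrightarrow> v \<longrightarrow> (\<lambda>k. ps (r k) (vs k)) \<longlonglongrightarrow> \<phi> v"
      using core[OF NX NY, of xs ps] sel by metis
    have limx': "(\<lambda>k. xs (r k)) \<longlonglongrightarrow> x" using limx by (simp add: o_def)
    have "(\<lambda>k. ps (r k) (T (xs (r k)))) \<longlonglongrightarrow> \<phi> (T x)"
      by (rule joint[rule_format, OF klinear_tendsto[OF T limx']])
    moreover have "(\<lambda>k. ps k (T (xs k))) \<longlonglongrightarrow> z" by (rule seq_to_z) (use sel in blast)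
    then have "((\<lambda>k. ps k (T (xs k))) \<circ> r) \<longlonglongrightarrow> z" by (rule LIMSEQ_subseq_LIMSEQ[OF _ r])
    then have "(\<lambda>k. ps (r k) (T (xs (r k)))) \<longlonglongrightarrow> z" by (simp add: o_def)
    ultimately have zeq: "\<phi> (T x) = z" by (rule LIMSEQ_unique)
    have "(\<lambda>k. NY (G (xs (r k)))) \<longlonglongrightarrow> NY (G x)"
      by (rule N_tendsto[OF NY klinear_tendsto[OF G limx']])
    moreover have "\<forall>k. 1 - inverse (real (Suc k)) < NY (G (xs k))" using sel by blast
    ultimately have "1 \<le> NY (G x)" by (intro lower_lim[OF r]) 
    then have "NY (G x) = 1" using Gle[OF x] by linarith
    then show "z \<in> {\<phi> (T x) | x \<phi>. x \<in> unit_sphere NX \<and> \<phi> \<in> dual_sphere NY \<and> NY (G x) = 1}"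
      using zeq x \<phi> unfolding unit_sphere_def by blast
  qed
  have S2: "{\<phi> (T x) | x \<phi>. x \<in> unit_sphere NX \<and> \<phi> \<in> dual_sphere NY \<and> NY (G x) = 1} \<subseteq> S_G NX NY G T"
    unfolding S_G_def
  proof (intro subsetI INT_I)
    fix z and d :: real assume z: "z \<in> {\<phi> (T x) | x \<phi>. x \<in> unit_sphere NX \<and> \<phi> \<in> dual_sphere NY \<and> NY (G x) = 1}"
      and d: "d \<in> {0<..}"
    then obtain x \<phi> where "z = \<phi> (T x)" "x \<in> unit_sphere NX" "\<phi> \<in> dual_sphere NY" "NY (G x) > 1 - d"
      by auto
    then have "z \<in> {\<phi> (T x) | x \<phi>. x \<in> unit_sphere NX \<and> \<phi> \<in> dual_sphere NY \<and> NY (G x) > 1 - d}"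
      by blast
    then show "z \<in> closure {\<phi> (T x) | x \<phi>. x \<in> unit_sphere NX \<and> \<phi> \<in> dual_sphere NY \<and> NY (G x) > 1 - d}"
      by (rule subsetD[OF closure_subset])
  qed
  have V1: "V_G re NX NY G T \<subseteq> {\<phi> (T x) | x \<phi>. x \<in> unit_sphere NX \<and> \<phi> \<in> dual_sphere NY \<and> \<phi> (G x) = 1}"
  proof
    fix z assume z: "z \<in> V_G re NX NY G T"
    have "\<forall>k. \<exists>x \<phi>. NX x = 1 \<and> \<phi> \<in> dual_sphere NY \<and> 1 - inverse (real (Suc k)) < re (\<phi> (G x)) \<and>
             dist (\<phi> (T x)) z < inverse (real (Suc k))"
    proof
      fix k
      have "z \<in> closure {\<phi> (T x) | x \<phi>. x \<in> unit_sphere NX \<and> \<phi> \<in> dual_sphere NY \<and>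
               re (\<phi> (G x)) > 1 - inverse (real (Suc k))}"
        using z unfolding V_G_def by auto
      then show "\<exists>x \<phi>. NX x = 1 \<and> \<phi> \<in> dual_sphere NY \<and> 1 - inverse (real (Suc k)) < re (\<phi> (G x)) \<and>
             dist (\<phi> (T x)) z < inverse (real (Suc k))"
        unfolding closure_approachable unit_sphere_def
        by (drule_tac x="inverse (real (Suc k))" in spec) auto
    qed
    then obtain xs ps where sel: "\<forall>k. NX (xs k) = 1 \<and> ps k \<in> dual_sphere NY \<and>
        1 - inverse (real (Suc k)) < re (ps k (G (xs k))) \<and> dist (ps k (T (xs k))) z < inverse (real (Suc k))"
      by (rule choice_pair)
    obtain r x \<phi> where r: "strict_mono r" and x: "NX x = 1" and \<phi>: "\<phi> \<in> dual_sphere NY"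
      and limx: "(xs \<circ> r) \<longlonglongrightarrow> x"
      and joint: "\<forall>vs v. vs \<longlonglongrightarrow> v \<longrightarrow> (\<lambda>k. ps (r k) (vs k)) \<longlonglongrightarrow> \<phi> v"
      using core[OF NX NY, of xs ps] sel by metis
    have limx': "(\<lambda>k. xs (r k)) \<longlonglongrightarrow> x" using limx by (simp add: o_def)
    have "(\<lambda>k. ps (r k) (T (xs (r k)))) \<longlonglongrightarrow> \<phi> (T x)"
      by (rule joint[rule_format, OF klinear_tendsto[OF T limx']])
    moreover have "(\<lambda>k. ps k (T (xs k))) \<longlonglongrightarrow> z" by (rule seq_to_z) (use sel in blast)
    then have "((\<lambda>k. ps k (T (xs k))) \<circ> r) \<longlonglongrightarrow> z" by (rule LIMSEQ_subseq_LIMSEQ[OF _ r])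
    then have "(\<lambda>k. ps (r k) (T (xs (r k)))) \<longlonglongrightarrow> z" by (simp add: o_def)
    ultimately have zeq: "\<phi> (T x) = z" by (rule LIMSEQ_unique)
    have "(\<lambda>k. ps (r k) (G (xs (r k)))) \<longlonglongrightarrow> \<phi> (G x)"
      by (rule joint[rule_format, OF klinear_tendsto[OF G limx']])
    then have "(\<lambda>k. re (ps (r k) (G (xs (r k))))) \<longlonglongrightarrow> re (\<phi> (G x))" by (rule rec)
    moreover have "\<forall>k. 1 - inverse (real (Suc k)) < re (ps k (G (xs k)))" using sel by blast
    ultimately have "1 \<le> re (\<phi> (G x))" by (intro lower_lim[OF r])
    moreover have "norm (\<phi> (G x)) \<le> 1" using dual_le[OF NY \<phi>, of "G x"] Gle[OF x] by linarith
    ultimately have "\<phi> (G x) = 1" by (rule reone)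
    then show "z \<in> {\<phi> (T x) | x \<phi>. x \<in> unit_sphere NX \<and> \<phi> \<in> dual_sphere NY \<and> \<phi> (G x) = 1}"
      using zeq x \<phi> unfolding unit_sphere_def by blast
  qed
  have V2: "{\<phi> (T x) | x \<phi>. x \<in> unit_sphere NX \<and> \<phi> \<in> dual_sphere NY \<and> \<phi> (G x) = 1} \<subseteq> V_G re NX NY G T"
    unfolding V_G_def
  proof (intro subsetI INT_I)
    fix z and d :: real assume z: "z \<in> {\<phi> (T x) | x \<phi>. x \<in> unit_sphere NX \<and> \<phi> \<in> dual_sphere NY \<and> \<phi> (G x) = 1}"
      and d: "d \<in> {0<..}"
    then obtain x \<phi> where "z = \<phi> (T x)" "x \<in> unit_sphere NX" "\<phi> \<in> dual_sphere NY" "re (\<phi> (G x)) > 1 - d"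
      using re1 by auto
    then have "z \<in> {\<phi> (T x) | x \<phi>. x \<in> unit_sphere NX \<and> \<phi> \<in> dual_sphere NY \<and> re (\<phi> (G x)) > 1 - d}"
      by blast
    then show "z \<in> closure {\<phi> (T x) | x \<phi>. x \<in> unit_sphere NX \<and> \<phi> \<in> dual_sphere NY \<and> re (\<phi> (G x)) > 1 - d}"
      by (rule subsetD[OF closure_subset])
  qed
  show ?thesis using S1 S2 V1 V2 by blast
qed

lemma complex_one:
  fixes z :: complex
  assumes "1 \<le> Re z" "cmod z \<le> 1" shows "z = 1"
proof -
  have re: "Re z = 1" using abs_Re_le_cmod[of z] assms by linarith
  have "cmod z ^ 2 \<le> 1" using assms(2) by (simp add: power_le_one)
  then have "Im z ^ 2 \<le> 0" using cmod_power2[of z] re by simp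
  then have "Im z = 0" by (metis power2_eq_square mult_eq_0_iff order_antisym zero_le_square)
  then show ?thesis using re by (simp add: complex_eq_iff)
qed

lemma real_case:
  shows "(\<forall>(NX :: real ^ 'n \<Rightarrow> real) (NY :: real ^ 'm \<Rightarrow> real) G T.
      is_norm_on NX \<and> is_norm_on NY \<and> klinear G \<and> klinear T \<and> op_norm NX NY G = 1 \<longrightarrow>
      S_G NX NY G T = {\<phi> (T x) | x \<phi>. x \<in> unit_sphere NX \<and> \<phi> \<in> dual_sphere NY \<and> NY (G x) = 1} \<and>
      V_G (\<lambda>r. r) NX NY G T = {\<phi> (T x) | x \<phi>. x \<in> unit_sphere NX \<and> \<phi> \<in> dual_sphere NY \<and> \<phi> (G x) = 1})"
proof (intro allI impI)
  fix NX :: "real ^ 'n \<Rightarrow> real" and NY :: "real ^ 'm \<Rightarrow> real" and G T :: "real ^ 'n \<Rightarrow> real ^ 'm"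
  assume H: "is_norm_on NX \<and> is_norm_on NY \<and> klinear G \<and> klinear T \<and> op_norm NX NY G = 1"
  show "S_G NX NY G T = {\<phi> (T x) | x \<phi>. x \<in> unit_sphere NX \<and> \<phi> \<in> dual_sphere NY \<and> NY (G x) = 1} \<and>
      V_G (\<lambda>r. r) NX NY G T = {\<phi> (T x) | x \<phi>. x \<in> unit_sphere NX \<and> \<phi> \<in> dual_sphere NY \<and> \<phi> (G x) = 1}"
  proof (rule main)
    show "is_norm_on NX" "is_norm_on NY" "klinear G" "klinear T" "op_norm NX NY G = 1" using H by auto
    show "(\<lambda>r. r) 1 = (1::real)" by simp
    show "\<And>f (a::real). f \<longlonglongrightarrow> a \<Longrightarrow> (\<lambda>k. (\<lambda>r. r) (f k)) \<longlonglongrightarrow> (\<lambda>r. r) a" by simp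
    show "\<And>z::real. 1 \<le> (\<lambda>r. r) z \<Longrightarrow> norm z \<le> 1 \<Longrightarrow> z = 1" by simp
  qed
qed

lemma complex_case:
  shows "(\<forall>(NX :: complex ^ 'n \<Rightarrow> real) (NY :: complex ^ 'm \<Rightarrow> real) G T.
      is_norm_on NX \<and> is_norm_on NY \<and> klinear G \<and> klinear T \<and> op_norm NX NY G = 1 \<longrightarrow>
      S_G NX NY G T = {\<phi> (T x) | x \<phi>. x \<in> unit_sphere NX \<and> \<phi> \<in> dual_sphere NY \<and> NY (G x) = 1} \<and>
      V_G Re NX NY G T = {\<phi> (T x) | x \<phi>. x \<in> unit_sphere NX \<and> \<phi> \<in> dual_sphere NY \<and> \<phi> (G x) = 1})"
proof (intro allI impI)
  fix NX :: "complex ^ 'n \<Rightarrow> real" and NY :: "complex ^ 'm \<Rightarrow> real" and G T :: "complex ^ 'n \<Rightarrow> complex ^ 'm"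
  assume H: "is_norm_on NX \<and> is_norm_on NY \<and> klinear G \<and> klinear T \<and> op_norm NX NY G = 1"
  show "S_G NX NY G T = {\<phi> (T x) | x \<phi>. x \<in> unit_sphere NX \<and> \<phi> \<in> dual_sphere NY \<and> NY (G x) = 1} \<and>
      V_G Re NX NY G T = {\<phi> (T x) | x \<phi>. x \<in> unit_sphere NX \<and> \<phi> \<in> dual_sphere NY \<and> \<phi> (G x) = 1}"
  proof (rule main)
    show "is_norm_on NX" "is_norm_on NY" "klinear G" "klinear T" "op_norm NX NY G = 1" using H by auto
    show "Re 1 = 1" by simp
    show "\<And>f a. f \<longlonglongrightarrow> a \<Longrightarrow> (\<lambda>k. Re (f k)) \<longlonglongrightarrow> Re a" by (rule tendsto_Re)
    show "\<And>z. 1 \<le> Re z \<Longrightarrow> norm z \<le> 1 \<Longrightarrow> z = 1" by (rule complex_one)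
  qed
qed

theorem proposition2p4:
  shows
  "(\<forall>(NX :: real ^ 'n \<Rightarrow> real) (NY :: real ^ 'm \<Rightarrow> real) G T.
      is_norm_on NX \<and> is_norm_on NY \<and> klinear G \<and> klinear T \<and> op_norm NX NY G = 1 \<longrightarrow>
      S_G NX NY G T = {\<phi> (T x) | x \<phi>. x \<in> unit_sphere NX \<and> \<phi> \<in> dual_sphere NY \<and> NY (G x) = 1} \<and>
      V_G (\<lambda>r. r) NX NY G T = {\<phi> (T x) | x \<phi>. x \<in> unit_sphere NX \<and> \<phi> \<in> dual_sphere NY \<and> \<phi> (G x) = 1})
   \<and>
   (\<forall>(NX :: complex ^ 'n \<Rightarrow> real) (NY :: complex ^ 'm \<Rightarrow> real) G T.
      is_norm_on NX \<and> is_norm_on NY \<and> klinear G \<and> klinear T \<and> op_norm NX NY G = 1 \<longrightarrow>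
      S_G NX NY G T = {\<phi> (T x) | x \<phi>. x \<in> unit_sphere NX \<and> \<phi> \<in> dual_sphere NY \<and> NY (G x) = 1} \<and>
      V_G Re NX NY G T = {\<phi> (T x) | x \<phi>. x \<in> unit_sphere NX \<and> \<phi> \<in> dual_sphere NY \<and> \<phi> (G x) = 1})"
  by (rule conjI[OF real_case complex_case])

end
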